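(* Run the UCB-like policy described in the context and let $\mathcal A$ be the event defined there. On the event $\mathcal A$, for every epoch $\ell\in\{1,\dots,q\}$, $$\sum_{i=1}^N\Big(\sqrt{n_i^{\ell-1}}\,\Big|\log\frac{\hat v_i^\ell}{v_i^*}\Big|-\Psi\Big)^2\le N\Psi^2,$$ and consequently $\big|\log(\hat v_i^\ell/v_i^* )\big|\le\varepsilon(n_i^{\ell-1})=\frac{(\sqrt N+1)\Psi}{\sqrt{n_i^{\ell-1}}}$ for all $i\in\mathcal N$.
   Context: Setting: $N$ products $\mathcal N=\{1,\dots,N\}$, a no-purchase option $0$, $K$ resources, horizon of $T$ periods. For $v\in\mathbb R_{>0}^N$ and $S\subseteq\mathcal N$ the MNL probabilities are $\varphi(i,S\mid v)=v_i/(1+\sum_{j\in S}v_j)$ for $i\in S$, $\varphi(0,S\mid v)=1/(1+\sum_{j\in S}v_j)$, $\varphi(i,S\mid v)=0$ for $i\in\mathcal N\setminus S$. The unknown true vector $v^*$ satisfies $v_i^*\in[1/R,R]$. In period $t$ the retailer offers $S_t\subseteq\mathcal N$ and the customer chooses $I_t\in S_t\cup\{0\}$ with conditional probability $\varphi(I_t,S_t\mid v^* )$ given the past. Product $i$ has revenue $r(i)\in[0,1]$ and consumption $a(i,k)\in[0,1]$ of resource $k$, resource $k$ has inventory $Tc(k)$. UCB-like policy: parameters $\tau$ (a multiple of $N$), switch budget $L$, $\delta\in(0,1)$, $q=\lfloor (L-N)/(K+1)\rfloor\ge1$; $\Psi=\frac{R(1+NR)^2}{2}\sqrt{2+4\log\frac{2T^{1/2}q(K+1)N}{\delta}}$,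 $\varepsilon(n)=(\sqrt N+1)\Psi/\sqrt n$. Warm start: for $i=1,\dots,N$ offer $S_t=\{i\}$ for $t=(i-1)\tau/N+1,\dots,i\tau/N$. Let $T_0=\tau$, $T_\ell=\ell\lfloor (T-\tau)/q\rfloor+\tau$. In epoch $\ell$: let $n_i^{\ell-1}=\sum_{t=1}^{T_{\ell-1}}\mathbb I(i\in S_t)$; the MLE is $\hat v^\ell=e^{\hat\theta}$ where $\hat\theta$ minimizes the negative log-likelihood $\mathcal L_{\ell-1}(\theta)=-\sum_{t=1}^{T_{\ell-1}}\big[\theta_{I_t}-\log(1+\sum_{i\in S_t}e^{\theta_i})\big]$ ($\theta_0:=0$) over $\theta$ with $e^{\theta_i}\in[1/R,R]$; the assortments in periods $T_{\ell-1}+1,\dots,T_\ell$ are then chosen (by solving an LP built from $\hat v^\ell$ and randomizing) based only on data up to $T_{\ell-1}$. Event: with $\theta^*=(\log v_i^* )_i$, $\mathcal A_{i,\ell}=\{|\partial\mathcal L_{\ell-1}/\partial\theta_i(\theta^* )|\le\sqrt{2n_i^{\ell-1}(1+2\log\frac{2\sqrt TqN}{\delta})}\}$ and $\mathcal A=\bigcap_{i=1}^N\bigcap_{\ell=1}^q\mathcal A_{i,\ell}$. *)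

theory Defs
  imports "HOL-Analysis.Analysis"
begin

text \<open>Products are 1..N, the no-purchase option is 0.  A sample path consists of the
offered assortments S t and the choices I t, t = 1,2,...\<close>

definition th0 :: "(nat \<Rightarrow> real) \<Rightarrow> nat \<Rightarrow> real" where
  "th0 \<theta> j = (if j = 0 then 0 else \<theta> j)"

definition mnl_nll :: "(nat \<Rightarrow> nat set) \<Rightarrow> (nat \<Rightarrow> nat) \<Rightarrow> nat \<Rightarrow> (nat \<Rightarrow> real) \<Rightarrow> real" where
  "mnl_nll S I n \<theta> =
     - (\<Sum>t\<in>{1..n}. th0 \<theta> (I t) - ln (1 + (\<Sum>i\<in>S t. exp (\<theta> i))))"

definition nll_partial :: "(nat \<Rightarrow> nat set) \<Rightarrow> (nat \<Rightarrow> nat) \<Rightarrow> nat \<Rightarrow> nat \<Rightarrow> (nat \<Rightarrow> real) \<Rightarrow> real" where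
  "nll_partial S I n i \<theta> = deriv (\<lambda>s. mnl_nll S I n (\<theta>(i := s))) (\<theta> i)"

definition offer_count :: "(nat \<Rightarrow> nat set) \<Rightarrow> nat \<Rightarrow> nat \<Rightarrow> nat" where
  "offer_count S n i = card {t\<in>{1..n}. i \<in> S t}"

definition param_box :: "nat \<Rightarrow> real \<Rightarrow> (nat \<Rightarrow> real) set" where
  "param_box N R = {\<theta>. \<forall>i\<in>{1..N}. exp (\<theta> i) \<in> {1/R..R}}"

definition epoch_end :: "nat \<Rightarrow> nat \<Rightarrow> nat \<Rightarrow> nat \<Rightarrow> nat" where
  "epoch_end T \<tau> q l = l * ((T - \<tau>) div q) + \<tau>"

definition Psi :: "nat \<Rightarrow> nat \<Rightarrow> nat \<Rightarrow> nat \<Rightarrow> real \<Rightarrow> real \<Rightarrow> real" where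
  "Psi N K T q R \<delta> = R * (1 + real N * R)^2 / 2 *
     sqrt (2 + 4 * ln (2 * sqrt (real T) * real q * (real K + 1) * real N / \<delta>))"

definition eps_conf :: "nat \<Rightarrow> real \<Rightarrow> nat \<Rightarrow> real" where
  "eps_conf N \<Psi> n = (sqrt (real N) + 1) * \<Psi> / sqrt (real n)"

end

theory Submission
  imports Defs
begin

lemma th0_deriv:
  assumes "\<And>j. ((\<lambda>s. \<Theta> s j) has_real_derivative D j) (at s0)"
  shows "((\<lambda>s. th0 (\<Theta> s) k) has_real_derivative th0 D k) (at s0)"
  using assms by (cases "k = 0") (auto simp: th0_def)

lemma nll_deriv:
  fixes \<Theta> :: "real \<Rightarrow> nat \<Rightarrow> real"
  assumes "\<And>j. ((\<lambda>s. \<Theta> s j) has_real_derivative D j) (at s0)"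
  shows "((\<lambda>s. mnl_nll S I n (\<Theta> s)) has_real_derivative
     (- (\<Sum>t\<in>{1..n}. th0 D (I t) - (\<Sum>j\<in>S t. exp (\<Theta> s0 j) * D j) / (1 + (\<Sum>j\<in>S t. exp (\<Theta> s0 j)))))) (at s0)"
proof -
  have pos: "0 < 1 + (\<Sum>j\<in>S t. exp (\<Theta> s0 j))" for t
    using sum_nonneg[of "S t" "\<lambda>j. exp (\<Theta> s0 j)"] by (smt (verit) exp_gt_zero)
  show ?thesis
    unfolding mnl_nll_def
    apply (intro derivative_eq_intros th0_deriv[OF assms] assms pos)
    apply (auto simp: sum_divide_distrib intro!: sum.cong th0_deriv assms)
    done
qed

lemma cs_weighted:
  fixes u d :: "nat \<Rightarrow> real"
  assumes "\<And>j. j \<in> A \<Longrightarrow> u j \<ge> 0"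
  shows "(\<Sum>j\<in>A. u j * d j)^2 \<le> (\<Sum>j\<in>A. u j) * (\<Sum>j\<in>A. u j * (d j)^2)"
proof -
  have "(\<Sum>j\<in>A. sqrt (u j) * (sqrt (u j) * d j))^2 \<le> (\<Sum>j\<in>A. (sqrt (u j))^2) * (\<Sum>j\<in>A. (sqrt (u j) * d j)^2)"
    by (rule Cauchy_Schwarz_ineq_sum)
  moreover have "(\<Sum>j\<in>A. sqrt (u j) * (sqrt (u j) * d j)) = (\<Sum>j\<in>A. u j * d j)"
    by (rule sum.cong) (use assms in \<open>auto simp: mult.assoc[symmetric]\<close>)
  moreover have "(\<Sum>j\<in>A. (sqrt (u j))^2) = (\<Sum>j\<in>A. u j)"
    by (rule sum.cong) (use assms in auto)
  moreover have "(\<Sum>j\<in>A. (sqrt (u j) * d j)^2) = (\<Sum>j\<in>A. u j * (d j)^2)"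
    by (rule sum.cong) (use assms in \<open>auto simp: power_mult_distrib\<close>)
  ultimately show ?thesis by simp
qed

lemma curv:
  fixes u d :: "nat \<Rightarrow> real" and N :: nat
  assumes fin: "finite A" and cardA: "card A \<le> N" and R: "R > 0"
    and u: "\<And>j. j \<in> A \<Longrightarrow> u j \<in> {1/R..R}"
  shows "(\<Sum>j\<in>A. (d j)^2) / (R * (1 + real N * R)^2)
     \<le> ((1 + (\<Sum>j\<in>A. u j)) * (\<Sum>j\<in>A. u j * (d j)^2) - (\<Sum>j\<in>A. u j * d j)^2)
        / (1 + (\<Sum>j\<in>A. u j))^2"
proof -
  define U where "U = (\<Sum>j\<in>A. u j)"
  define V where "V = (\<Sum>j\<in>A. u j * d j)"
  define W where "W = (\<Sum>j\<in>A. u j * (d j)^2)"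
  have u0: "j \<in> A \<Longrightarrow> u j \<ge> 0" for j using u[of j] R
    by (smt (verit, ccfv_SIG) atLeastAtMost_iff divide_pos_pos)
  have U0: "U \<ge> 0" unfolding U_def using u0 by (simp add: sum_nonneg)
  have UN: "U \<le> real N * R"
  proof -
    have "U \<le> (\<Sum>j\<in>A. R)" unfolding U_def using u by (intro sum_mono) auto
    also have "\<dots> = real (card A) * R" by simp
    also have "\<dots> \<le> real N * R" using cardA R by (simp add: mult_right_mono)
    finally show ?thesis .
  qed
  have cs: "V^2 \<le> U * W" unfolding U_def V_def W_def by (rule cs_weighted) (use u0 in auto)
  have W1: "(\<Sum>j\<in>A. (d j)^2) / R \<le> W"
  proof -
    have "(\<Sum>j\<in>A. (d j)^2) / R = (\<Sum>j\<in>A. (1/R) * (d j)^2)" by (simp add: sum_divide_distrib)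
    also have "\<dots> \<le> W" unfolding W_def using u by (intro sum_mono mult_right_mono) auto
    finally show ?thesis .
  qed
  have W0: "W \<ge> 0" unfolding W_def using u0 by (simp add: sum_nonneg)
  have key: "W \<le> (1 + U) * W - V^2" using cs by (simp add: algebra_simps)
  have "(\<Sum>j\<in>A. (d j)^2) / (R * (1 + real N * R)^2) = ((\<Sum>j\<in>A. (d j)^2) / R) / (1 + real N * R)^2"
    by simp
  also have "\<dots> \<le> W / (1 + real N * R)^2" using divide_right_mono[OF W1, of "(1 + real N * R)^2"] by simp
  also have "\<dots> \<le> W / (1 + U)^2"
    using W0 U0 UN by (intro divide_left_mono power_mono mult_pos_pos) auto
  also have "\<dots> \<le> ((1 + U) * W - V^2) / (1 + U)^2"
    using key by (simp add: divide_right_mono)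
  finally show ?thesis unfolding U_def V_def W_def .
qed

lemma psi_deriv:
  fixes a d :: "nat \<Rightarrow> real"
  shows "((\<lambda>s. (\<Sum>j\<in>A. exp (a j + s * d j) * d j) / (1 + (\<Sum>j\<in>A. exp (a j + s * d j))))
     has_real_derivative
       ((1 + (\<Sum>j\<in>A. exp (a j + s * d j))) * (\<Sum>j\<in>A. exp (a j + s * d j) * (d j)^2)
         - (\<Sum>j\<in>A. exp (a j + s * d j) * d j)^2) / (1 + (\<Sum>j\<in>A. exp (a j + s * d j)))^2) (at s)"
proof -
  define U where "U = 1 + (\<Sum>j\<in>A. exp (a j + s * d j))"
  define V where "V = (\<Sum>j\<in>A. exp (a j + s * d j) * d j)"
  define W where "W = (\<Sum>j\<in>A. exp (a j + s * d j) * (d j)^2)"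
  have pos: "0 < U" unfolding U_def
    using sum_nonneg[of A "\<lambda>j. exp (a j + s * d j)"] by (smt (verit) exp_gt_zero)
  have dU: "((\<lambda>s. 1 + (\<Sum>j\<in>A. exp (a j + s * d j))) has_real_derivative V) (at s)"
    unfolding V_def by (auto intro!: derivative_eq_intros)
  have dV: "((\<lambda>s. (\<Sum>j\<in>A. exp (a j + s * d j) * d j)) has_real_derivative W) (at s)"
    unfolding W_def by (auto intro!: derivative_eq_intros simp: power2_eq_square mult.assoc)
  have ne: "1 + (\<Sum>j\<in>A. exp (a j + s * d j)) \<noteq> 0" using pos unfolding U_def by simp
  have eq: "(W * U - V * V) / (U * U) = (U * W - V^2) / U^2"
    by (simp add: power2_eq_square algebra_simps)
  show ?thesis using DERIV_divide[OF dV dU ne] eq unfolding U_def[symmetric] V_def[symmetric] W_def[symmetric]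
    by simp
qed

lemma convex_int:
  fixes lo hi a b s :: real
  assumes "lo \<le> a" "a \<le> hi" "lo \<le> b" "b \<le> hi" "0 \<le> s" "s \<le> 1"
  shows "lo \<le> a + s * (b - a) \<and> a + s * (b - a) \<le> hi"
proof -
  have e: "a + s * (b - a) = (1 - s) * a + s * b" by (simp add: algebra_simps)
  have "(1 - s) * lo \<le> (1 - s) * a" "s * lo \<le> s * b" "(1 - s) * a \<le> (1 - s) * hi" "s * b \<le> s * hi"
    using assms by (auto intro: mult_left_mono)
  then show ?thesis unfolding e by (auto simp: algebra_simps)
qed


theorem theorem6:
  fixes N K T \<tau> L q :: nat and R \<delta> :: real
    and vstar :: "nat \<Rightarrow> real"
    and S :: "nat \<Rightarrow> nat set" and I :: "nat \<Rightarrow> nat"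
  assumes N_pos: "N \<ge> 1"
    and tau_mult: "N dvd \<tau>" and tau_pos: "\<tau> > 0" and tau_le: "\<tau> \<le> T"
    and delta: "0 < \<delta>" "\<delta> < 1"
    and q_def: "q = nat \<lfloor>(real L - real N) / (real K + 1)\<rfloor>" and q_pos: "q \<ge> 1"
    and R_pos: "R > 0"
    and vstar_range: "\<forall>i\<in>{1..N}. vstar i \<in> {1/R..R}"
    \<comment> \<open>warm start\<close>
    and warm: "\<forall>i\<in>{1..N}. \<forall>t\<in>{(i - 1) * (\<tau> div N) + 1 .. i * (\<tau> div N)}. S t = {i}"
    \<comment> \<open>later assortments: arbitrary subsets of the products\<close>
    and assort: "\<forall>t\<in>{1..T}. S t \<subseteq> {1..N}"
    and choice: "\<forall>t\<in>{1..T}. I t \<in> S t \<union> {0}"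
    \<comment> \<open>the event A\<close>
    and event_A: "\<forall>i\<in>{1..N}. \<forall>l\<in>{1..q}.
        \<bar>nll_partial S I (epoch_end T \<tau> q (l - 1)) i (\<lambda>j. ln (vstar j))\<bar>
          \<le> sqrt (2 * real (offer_count S (epoch_end T \<tau> q (l - 1)) i)
                  * (1 + 2 * ln (2 * sqrt (real T) * real q * real N / \<delta>)))"
  shows "\<forall>l\<in>{1..q}. \<forall>\<theta>hat.
           (\<theta>hat \<in> param_box N R \<and>
            (\<forall>\<theta>\<in>param_box N R. mnl_nll S I (epoch_end T \<tau> q (l - 1)) \<theta>hat
                                  \<le> mnl_nll S I (epoch_end T \<tau> q (l - 1)) \<theta>))
           \<longrightarrow>
           ((\<Sum>i=1..N. (sqrt (real (offer_count S (epoch_end T \<tau> q (l - 1)) i))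
                        * \<bar>ln (exp (\<theta>hat i) / vstar i)\<bar> - Psi N K T q R \<delta>)^2)
               \<le> real N * (Psi N K T q R \<delta>)^2
            \<and> (\<forall>i\<in>{1..N}. \<bar>ln (exp (\<theta>hat i) / vstar i)\<bar>
                 \<le> eps_conf N (Psi N K T q R \<delta>) (offer_count S (epoch_end T \<tau> q (l - 1)) i)))"
proof (intro ballI allI impI)
  fix l \<theta>hat
  assume l: "l \<in> {1..q}"
  assume hat: "\<theta>hat \<in> param_box N R \<and>
            (\<forall>\<theta>\<in>param_box N R. mnl_nll S I (epoch_end T \<tau> q (l - 1)) \<theta>hat
                                  \<le> mnl_nll S I (epoch_end T \<tau> q (l - 1)) \<theta>)"
  define n where "n = epoch_end T \<tau> q (l - 1)"
  define P where "P = Psi N K T q R \<delta>"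
  define cnt where "cnt i = offer_count S n i" for i
  define ts where "ts j = ln (vstar j)" for j
  define \<Delta> where "\<Delta> j = \<theta>hat j - ts j" for j
  define \<Theta> where "\<Theta> s = (\<lambda>j. ts j + s * \<Delta> j)" for s :: real
  define \<psi> where "\<psi> t s = (\<Sum>j\<in>S t. exp (ts j + s * \<Delta> j) * \<Delta> j) / (1 + (\<Sum>j\<in>S t. exp (ts j + s * \<Delta> j)))" for t s
  define \<Phi> where "\<Phi> s = mnl_nll S I n (\<Theta> s)" for s
  define \<Phi>' where "\<Phi>' s = - (\<Sum>t\<in>{1..n}. th0 \<Delta> (I t) - \<psi> t s)" for s
  have Rpos: "R > 0" by (rule R_pos)
  have vpos: "j \<in> {1..N} \<Longrightarrow> vstar j > 0" for j
    using vstar_range R_pos by (smt (verit, best) atLeastAtMost_iff divide_pos_pos)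
  have hatbox: "\<theta>hat \<in> param_box N R" and hatmin: "\<And>\<theta>. \<theta> \<in> param_box N R \<Longrightarrow> mnl_nll S I n \<theta>hat \<le> mnl_nll S I n \<theta>"
    using hat unfolding n_def by auto
  have nT: "n \<le> T"
  proof -
    have "(l - 1) * ((T - \<tau>) div q) \<le> q * ((T - \<tau>) div q)" using l by (intro mult_right_mono) auto
    also have "\<dots> \<le> T - \<tau>" by simp
    finally show ?thesis unfolding n_def epoch_end_def using tau_le by linarith
  qed
  have taun: "\<tau> \<le> n" unfolding n_def epoch_end_def by simp
  have St: "t \<in> {1..n} \<Longrightarrow> S t \<subseteq> {1..N}" for t using assort nT by auto
  have Sfin: "t \<in> {1..n} \<Longrightarrow> finite (S t)" for t using St finite_subset by blast
  have Scard: "t \<in> {1..n} \<Longrightarrow> card (S t) \<le> N" for t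
    using card_mono[OF _ St[of t]] by simp
  have It: "t \<in> {1..n} \<Longrightarrow> I t \<in> S t \<union> {0}" for t using choice nT by auto
  have ts_rng: "j \<in> {1..N} \<Longrightarrow> ln (1/R) \<le> ts j \<and> ts j \<le> ln R" for j
    using vstar_range vpos R_pos unfolding ts_def by (auto simp del: ln_div)
  have hat_rng: "j \<in> {1..N} \<Longrightarrow> ln (1/R) \<le> \<theta>hat j \<and> \<theta>hat j \<le> ln R" for j
  proof -
    assume j: "j \<in> {1..N}"
    have "exp (\<theta>hat j) \<in> {1/R..R}" using hatbox j unfolding param_box_def by auto
    then show ?thesis using R_pos
      by (metis atLeastAtMost_iff divide_pos_pos exp_gt_zero ln_exp ln_le_cancel_iff zero_less_one)
  qed
  have Theta_box: "0 \<le> s \<Longrightarrow> s \<le> 1 \<Longrightarrow> j \<in> {1..N} \<Longrightarrow> exp (\<Theta> s j) \<in> {1/R..R}" for s j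
  proof -
    assume s: "0 \<le> s" "s \<le> 1" and j: "j \<in> {1..N}"
    have "ln (1/R) \<le> \<Theta> s j \<and> \<Theta> s j \<le> ln R"
      unfolding \<Theta>_def \<Delta>_def using convex_int[OF _ _ _ _ s] ts_rng[OF j] hat_rng[OF j] by blast
    then have "exp (ln (1/R)) \<le> exp (\<Theta> s j) \<and> exp (\<Theta> s j) \<le> exp (ln R)" by simp
    then show ?thesis using R_pos by simp
  qed
  have Theta_pb: "0 \<le> s \<Longrightarrow> s \<le> 1 \<Longrightarrow> \<Theta> s \<in> param_box N R" for s
    using Theta_box unfolding param_box_def by auto
  have Theta1: "\<Theta> 1 = \<theta>hat" unfolding \<Theta>_def \<Delta>_def by auto
  have Theta0: "\<Theta> 0 = ts" unfolding \<Theta>_def by auto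
  have dPhi: "(\<Phi> has_real_derivative \<Phi>' s) (at s)" for s
  proof -
    have "((\<lambda>s. \<Theta> s j) has_real_derivative \<Delta> j) (at s)" for j
      unfolding \<Theta>_def by (auto intro!: derivative_eq_intros)
    from nll_deriv[of \<Theta> \<Delta> s S I n, OF this]
    show ?thesis unfolding \<Phi>_def[abs_def] \<Phi>'_def \<psi>_def \<Theta>_def by simp
  qed
  have Phi'1: "\<Phi>' 1 \<le> 0"
  proof (rule ccontr)
    assume "\<not> \<Phi>' 1 \<le> 0"
    then obtain d where d: "d > 0" "\<And>h. h > 0 \<Longrightarrow> h < d \<Longrightarrow> \<Phi> (1 - h) < \<Phi> 1"
      using DERIV_pos_inc_left[OF dPhi[of 1]] by force
    define h where "h = min (d/2) (1/2)"
    have "\<Phi> (1 - h) < \<Phi> 1" using d unfolding h_def by auto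
    moreover have "\<Phi> 1 \<le> \<Phi> (1 - h)"
      unfolding \<Phi>_def Theta1 using hatmin Theta_pb[of "1 - h"] d unfolding h_def by auto
    ultimately show False by simp
  qed
  define m where "m = 1 / (R * (1 + real N * R)^2)"
  define C where "C = (\<Sum>t\<in>{1..n}. \<Sum>j\<in>S t. (\<Delta> j)^2)"
  define \<psi>2 where "\<psi>2 t s = ((1 + (\<Sum>j\<in>S t. exp (ts j + s * \<Delta> j))) * (\<Sum>j\<in>S t. exp (ts j + s * \<Delta> j) * (\<Delta> j)^2)
         - (\<Sum>j\<in>S t. exp (ts j + s * \<Delta> j) * \<Delta> j)^2) / (1 + (\<Sum>j\<in>S t. exp (ts j + s * \<Delta> j)))^2" for t s
  have dpsi: "((\<lambda>s. \<psi> t s) has_real_derivative \<psi>2 t s) (at s)" for t s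
    unfolding \<psi>_def \<psi>2_def by (rule psi_deriv)
  have dG: "((\<lambda>s. \<Phi>' s - s * m * C) has_real_derivative (\<Sum>t\<in>{1..n}. \<psi>2 t s) - m * C) (at s)" for s
    unfolding \<Phi>'_def
    by (auto intro!: derivative_eq_intros dpsi simp: sum_negf sum_subtractf)
  have psi2_ge: "0 \<le> s \<Longrightarrow> s \<le> 1 \<Longrightarrow> m * C \<le> (\<Sum>t\<in>{1..n}. \<psi>2 t s)" for s
  proof -
    assume s: "0 \<le> s" "s \<le> 1"
    have "m * C = (\<Sum>t\<in>{1..n}. (\<Sum>j\<in>S t. (\<Delta> j)^2) / (R * (1 + real N * R)^2))"
      unfolding m_def C_def by (simp add: sum_distrib_left sum_divide_distrib)
    also have "\<dots> \<le> (\<Sum>t\<in>{1..n}. \<psi>2 t s)"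
    proof (rule sum_mono)
      fix t assume t: "t \<in> {1..n}"
      show "(\<Sum>j\<in>S t. (\<Delta> j)^2) / (R * (1 + real N * R)^2) \<le> \<psi>2 t s"
        unfolding \<psi>2_def
        apply (rule curv[OF Sfin[OF t] Scard[OF t] R_pos])
        using Theta_box[OF s] St[OF t] unfolding \<Theta>_def by auto
    qed
    finally show ?thesis .
  qed
  have G01: "\<Phi>' 0 - 0 * m * C \<le> \<Phi>' 1 - 1 * m * C"
    apply (rule DERIV_nonneg_imp_nondecreasing[of 0 1 "\<lambda>s. \<Phi>' s - s * m * C"])
    using dG psi2_ge by force+
  have mC: "m * C \<le> - \<Phi>' 0" using G01 Phi'1 by simp
  have Ccnt: "C = (\<Sum>i=1..N. real (cnt i) * (\<Delta> i)^2)"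
  proof -
    have "C = (\<Sum>t\<in>{1..n}. \<Sum>i\<in>{1..N}. if i \<in> S t then (\<Delta> i)^2 else 0)"
      unfolding C_def
    proof (rule sum.cong[OF refl])
      fix t assume t: "t \<in> {1..n}"
      have "(\<Sum>i\<in>{1..N}. if i \<in> S t then (\<Delta> i)^2 else 0) = (\<Sum>i\<in>{1..N} \<inter> S t. (\<Delta> i)^2)"
        by (simp add: sum.inter_restrict)
      also have "{1..N} \<inter> S t = S t" using St[OF t] by auto
      finally show "(\<Sum>j\<in>S t. (\<Delta> j)^2) = (\<Sum>i\<in>{1..N}. if i \<in> S t then (\<Delta> i)^2 else 0)" by simp
    qed
    also have "\<dots> = (\<Sum>i\<in>{1..N}. \<Sum>t\<in>{1..n}. if i \<in> S t then (\<Delta> i)^2 else 0)"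
      by (rule sum.swap)
    also have "\<dots> = (\<Sum>i=1..N. real (cnt i) * (\<Delta> i)^2)"
    proof (rule sum.cong[OF refl])
      fix i
      have "(\<Sum>t\<in>{1..n}. if i \<in> S t then (\<Delta> i)^2 else 0) = (\<Sum>t\<in>{t\<in>{1..n}. i \<in> S t}. (\<Delta> i)^2)"
        by (rule sum.inter_filter[symmetric]) simp
      also have "(\<Sum>t\<in>{t\<in>{1..n}. i \<in> S t}. (\<Delta> i)^2) = real (cnt i) * (\<Delta> i)^2"
        unfolding cnt_def offer_count_def by simp
      finally show "(\<Sum>t\<in>{1..n}. if i \<in> S t then (\<Delta> i)^2 else 0) = real (cnt i) * (\<Delta> i)^2" .
    qed
    finally show ?thesis .
  qed
  define e where "e i = (\<lambda>j. if j = i then (1::real) else 0)" for i :: nat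
  define Dn where "Dn t = 1 + (\<Sum>j\<in>S t. exp (ts j))" for t
  define g where "g i = nll_partial S I n i ts" for i
  have g_val: "g i = - (\<Sum>t\<in>{1..n}. th0 (e i) (I t) - (if i \<in> S t then exp (ts i) else 0) / Dn t)" for i
  proof -
    have "((\<lambda>s. (ts(i := s)) j) has_real_derivative e i j) (at (ts i))" for j
      unfolding e_def by (cases "j = i") auto
    from nll_deriv[of "\<lambda>s. ts(i := s)" "e i" "ts i" S I n, OF this]
    have D: "((\<lambda>s. mnl_nll S I n (ts(i := s))) has_real_derivative
        - (\<Sum>t\<in>{1..n}. th0 (e i) (I t) - (\<Sum>j\<in>S t. exp (ts j) * e i j) / Dn t)) (at (ts i))"
      unfolding Dn_def by simp
    have "(\<Sum>t\<in>{1..n}. th0 (e i) (I t) - (\<Sum>j\<in>S t. exp (ts j) * e i j) / Dn t)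
        = (\<Sum>t\<in>{1..n}. th0 (e i) (I t) - (if i \<in> S t then exp (ts i) else 0) / Dn t)"
    proof (rule sum.cong[OF refl])
      fix t assume t: "t \<in> {1..n}"
      have "(\<Sum>j\<in>S t. exp (ts j) * e i j) = (if i \<in> S t then exp (ts i) else 0)"
        unfolding e_def using Sfin[OF t] by (simp add: sum.delta' mult.commute[of "exp _"] if_distrib cong: if_cong)
      then show "th0 (e i) (I t) - (\<Sum>j\<in>S t. exp (ts j) * e i j) / Dn t
          = th0 (e i) (I t) - (if i \<in> S t then exp (ts i) else 0) / Dn t" by simp
    qed
    then show ?thesis using DERIV_imp_deriv[OF D] unfolding g_def nll_partial_def by simp
  qed
  have Phi'0: "\<Phi>' 0 = (\<Sum>i=1..N. \<Delta> i * g i)"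
  proof -
    have per_t: "(\<Sum>i=1..N. \<Delta> i * (th0 (e i) (I t) - (if i \<in> S t then exp (ts i) else 0) / Dn t))
        = th0 \<Delta> (I t) - \<psi> t 0" if t: "t \<in> {1..n}" for t
    proof -
      have A: "(\<Sum>i=1..N. \<Delta> i * th0 (e i) (I t)) = th0 \<Delta> (I t)"
      proof (cases "I t = 0")
        case True then show ?thesis by (simp add: th0_def)
      next
        case False
        then have "I t \<in> {1..N}" using It[OF t] St[OF t] by auto
        then show ?thesis using False unfolding th0_def e_def by (simp add: if_distrib sum.delta cong: if_cong)
      qed
      have "(\<Sum>i=1..N. \<Delta> i * ((if i \<in> S t then exp (ts i) else 0) / Dn t))
          = (\<Sum>i\<in>{1..N}. if i \<in> S t then exp (ts i) * \<Delta> i / Dn t else 0)"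
        by (rule sum.cong) auto
      also have "\<dots> = (\<Sum>i\<in>{1..N} \<inter> S t. exp (ts i) * \<Delta> i / Dn t)"
        by (simp add: sum.inter_restrict)
      also have "{1..N} \<inter> S t = S t" using St[OF t] by auto
      also have "(\<Sum>i\<in>S t. exp (ts i) * \<Delta> i / Dn t) = \<psi> t 0"
        unfolding \<psi>_def Dn_def by (simp add: sum_divide_distrib)
      finally show ?thesis using A by (simp add: right_diff_distrib sum_subtractf)
    qed
    have "(\<Sum>i=1..N. \<Delta> i * g i)
        = - (\<Sum>i=1..N. \<Sum>t\<in>{1..n}. \<Delta> i * (th0 (e i) (I t) - (if i \<in> S t then exp (ts i) else 0) / Dn t))"
      unfolding g_val by (simp add: sum_distrib_left sum_negf)
    also have "\<dots> = - (\<Sum>t\<in>{1..n}. \<Sum>i=1..N. \<Delta> i * (th0 (e i) (I t) - (if i \<in> S t then exp (ts i) else 0) / Dn t))"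
      by (subst sum.swap) simp
    also have "\<dots> = - (\<Sum>t\<in>{1..n}. th0 \<Delta> (I t) - \<psi> t 0)"
      using per_t by simp
    finally show ?thesis unfolding \<Phi>'_def by simp
  qed
  define B where "B = sqrt (2 + 4 * ln (2 * sqrt (real T) * real q * (real K + 1) * real N / \<delta>))"
  have Tpos: "T > 0" using tau_pos tau_le by simp
  define A0 where "A0 = 2 * sqrt (real T) * real q * real N / \<delta>"
  have A0pos: "A0 > 0" unfolding A0_def using Tpos q_pos N_pos delta by simp
  have A0ge: "A0 \<ge> 1"
  proof -
    have "sqrt (real T) \<ge> 1" using Tpos by simp
    moreover have "real q \<ge> 1" "real N \<ge> 1" using q_pos N_pos by auto
    ultimately have "2 * sqrt (real T) * real q * real N \<ge> 1"
      by (metis le_numeral_extra(4) less_eq_real_def mult_ge1_I one_le_numeral)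
    then have "2 * sqrt (real T) * real q * real N \<ge> \<delta>" using delta by linarith
    then show ?thesis unfolding A0_def using delta by simp
  qed
  have lnA0: "ln A0 \<ge> 0" using A0ge by simp
  have B_ge: "sqrt (2 + 4 * ln A0) \<le> B"
  proof -
    have "A0 \<le> 2 * sqrt (real T) * real q * (real K + 1) * real N / \<delta>"
    proof -
      have "A0 = A0 * 1" by simp
      also have "\<dots> \<le> A0 * (real K + 1)" using A0pos by (intro mult_left_mono) auto
      also have "\<dots> = 2 * sqrt (real T) * real q * (real K + 1) * real N / \<delta>" unfolding A0_def by simp
      finally show ?thesis .
    qed
    then have "ln A0 \<le> ln (2 * sqrt (real T) * real q * (real K + 1) * real N / \<delta>)"
      using A0pos by simp
    then show ?thesis unfolding B_def using lnA0 by (intro real_sqrt_le_mono) linarith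
  qed
  have B0: "B \<ge> 0"
  proof -
    have "0 \<le> sqrt (2 + 4 * ln A0)" using lnA0 by simp
    then show ?thesis using B_ge by linarith
  qed
  have tsf: "(\<lambda>j. ln (vstar j)) = ts" by (auto simp: ts_def)
  have gbound: "i \<in> {1..N} \<Longrightarrow> \<bar>g i\<bar> \<le> sqrt (real (cnt i)) * B" for i
  proof -
    assume i: "i \<in> {1..N}"
    have "\<bar>g i\<bar> \<le> sqrt (2 * real (cnt i) * (1 + 2 * ln A0))"
      using event_A i l unfolding g_def cnt_def n_def A0_def tsf by auto
    also have "2 * real (cnt i) * (1 + 2 * ln A0) = real (cnt i) * (2 + 4 * ln A0)" by (simp add: algebra_simps)
    also have "sqrt \<dots> = sqrt (real (cnt i)) * sqrt (2 + 4 * ln A0)" by (simp add: real_sqrt_mult)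
    also have "\<dots> \<le> sqrt (real (cnt i)) * B" using B_ge by (intro mult_left_mono) auto
    finally show ?thesis .
  qed
  define x where "x i = sqrt (real (cnt i)) * \<bar>\<Delta> i\<bar>" for i
  have x0: "x i \<ge> 0" for i unfolding x_def by simp
  have x2: "(x i)^2 = real (cnt i) * (\<Delta> i)^2" for i unfolding x_def by (simp add: power_mult_distrib)
  have mpos: "m > 0"
  proof -
    have "1 + real N * R > 0" using R_pos by (simp add: add_pos_nonneg)
    then show ?thesis unfolding m_def using R_pos by simp
  qed
  have main: "m * (\<Sum>i=1..N. (x i)^2) \<le> B * (\<Sum>i=1..N. x i)"
  proof -
    have "m * (\<Sum>i=1..N. (x i)^2) = m * C" unfolding Ccnt x2 ..
    also have "\<dots> \<le> - (\<Sum>i=1..N. \<Delta> i * g i)" using mC Phi'0 by simp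
    also have "\<dots> = (\<Sum>i=1..N. - (\<Delta> i * g i))" by (simp add: sum_negf)
    also have "\<dots> \<le> (\<Sum>i=1..N. B * x i)"
    proof (rule sum_mono)
      fix i assume i: "i \<in> {1..N}"
      have "- (\<Delta> i * g i) \<le> \<bar>\<Delta> i\<bar> * \<bar>g i\<bar>" by (simp add: abs_mult[symmetric])
      also have "\<dots> \<le> \<bar>\<Delta> i\<bar> * (sqrt (real (cnt i)) * B)" using gbound[OF i] by (intro mult_left_mono) auto
      also have "\<dots> = B * x i" unfolding x_def by simp
      finally show "- (\<Delta> i * g i) \<le> B * x i" .
    qed
    also have "\<dots> = B * (\<Sum>i=1..N. x i)" by (simp add: sum_distrib_left)
    finally show ?thesis .
  qed
  have PB: "P = B / (2 * m)" unfolding P_def Psi_def B_def m_def by simp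
  have P0: "P \<ge> 0" using PB B0 mpos by simp
  have sq: "(\<Sum>i=1..N. (x i)^2) \<le> 2 * P * (\<Sum>i=1..N. x i)"
  proof -
    have "(\<Sum>i=1..N. (x i)^2) \<le> B * (\<Sum>i=1..N. x i) / m" using main mpos by (simp add: field_simps)
    also have "\<dots> = 2 * P * (\<Sum>i=1..N. x i)" unfolding PB using mpos by (simp add: field_simps)
    finally show ?thesis .
  qed
  have part1: "(\<Sum>i=1..N. (x i - P)^2) \<le> real N * P^2"
  proof -
    have "(\<Sum>i=1..N. (x i - P)^2) = (\<Sum>i=1..N. (x i)^2) - 2 * P * (\<Sum>i=1..N. x i) + real N * P^2"
      by (simp add: power2_diff sum.distrib sum_subtractf sum_distrib_left mult.assoc mult.commute[of P])
    then show ?thesis using sq by simp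
  qed
  have Deq: "i \<in> {1..N} \<Longrightarrow> ln (exp (\<theta>hat i) / vstar i) = \<Delta> i" for i
    using vpos[of i] unfolding \<Delta>_def ts_def by (simp add: ln_div)
  have cnt1: "i \<in> {1..N} \<Longrightarrow> cnt i \<ge> 1" for i
  proof -
    assume i: "i \<in> {1..N}"
    have "N \<le> \<tau>" using tau_mult tau_pos by (simp add: dvd_imp_le)
    then have k1: "\<tau> div N \<ge> 1" using N_pos by (metis One_nat_def div_le_mono div_self not_one_le_zero)
    define t0 where "t0 = i * (\<tau> div N)"
    have t0r: "t0 \<in> {(i - 1) * (\<tau> div N) + 1 .. i * (\<tau> div N)}"
      unfolding t0_def using i k1 by (cases i) auto
    have "t0 \<le> N * (\<tau> div N)" unfolding t0_def using i by (intro mult_right_mono) auto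
    also have "N * (\<tau> div N) = \<tau>" using tau_mult by simp
    finally have "t0 \<le> n" using taun by simp
    moreover have "t0 \<ge> 1" unfolding t0_def using i k1 by simp
    moreover have "i \<in> S t0" using warm i t0r by auto
    ultimately have "t0 \<in> {t\<in>{1..n}. i \<in> S t}" by auto
    moreover have "finite {t\<in>{1..n}. i \<in> S t}" by simp
    ultimately have "card {t\<in>{1..n}. i \<in> S t} > 0" using card_gt_0_iff by blast
    then show ?thesis unfolding cnt_def offer_count_def by simp
  qed
  have part2: "\<forall>i\<in>{1..N}. \<bar>\<Delta> i\<bar> \<le> eps_conf N P (cnt i)"
  proof
    fix i assume i: "i \<in> {1..N}"
    have "(x i - P)^2 \<le> (\<Sum>i=1..N. (x i - P)^2)"
      by (rule member_le_sum) (use i in auto)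
    also have "\<dots> \<le> real N * P^2" by (rule part1)
    finally have "sqrt ((x i - P)^2) \<le> sqrt (real N * P^2)" by (rule real_sqrt_le_mono)
    then have "\<bar>x i - P\<bar> \<le> sqrt (real N) * P" using P0 by (simp add: real_sqrt_mult)
    then have xb: "sqrt (real (cnt i)) * \<bar>\<Delta> i\<bar> \<le> (sqrt (real N) + 1) * P"
      unfolding x_def by (simp add: algebra_simps)
    have cp: "sqrt (real (cnt i)) > 0" using cnt1[OF i] by simp
    show "\<bar>\<Delta> i\<bar> \<le> eps_conf N P (cnt i)"
      unfolding eps_conf_def using xb cp by (simp add: pos_le_divide_eq mult.commute)
  qed
  have sumeq: "(\<Sum>i=1..N. (sqrt (real (offer_count S (epoch_end T \<tau> q (l - 1)) i))
                        * \<bar>ln (exp (\<theta>hat i) / vstar i)\<bar> - Psi N K T q R \<delta>)^2) = (\<Sum>i=1..N. (x i - P)^2)"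
    by (rule sum.cong[OF refl]) (simp add: Deq x_def cnt_def n_def P_def)
  show "(\<Sum>i=1..N. (sqrt (real (offer_count S (epoch_end T \<tau> q (l - 1)) i))
                        * \<bar>ln (exp (\<theta>hat i) / vstar i)\<bar> - Psi N K T q R \<delta>)^2)
               \<le> real N * (Psi N K T q R \<delta>)^2
            \<and> (\<forall>i\<in>{1..N}. \<bar>ln (exp (\<theta>hat i) / vstar i)\<bar>
                 \<le> eps_conf N (Psi N K T q R \<delta>) (offer_count S (epoch_end T \<tau> q (l - 1)) i))"
    using part1 part2 sumeq Deq unfolding P_def cnt_def n_def by auto
qed

end
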